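(* For every integer $r\ge1$, let $\mathcal{REP}_r$ be the category of finite-dimensional modules over the polynomial algebra $\Bbbk[x_1,\dots,x_r]$. Then $\mathrm{fpdim}(\mathcal{REP}_r)=r$.
   Context: $\Bbbk$ is algebraically closed. For a $\Bbbk$-linear abelian category $\mathcal C$: a brick is an object $M$ with $\mathrm{Hom}_{\mathcal C}(M,M)=\Bbbk$; a brick set is a finite set $\phi=\{X_1,\dots,X_n\}$ of bricks with $\dim\mathrm{Hom}_{\mathcal C}(X_i,X_j)=\delta_{ij}$; its adjacency matrix is $C(\phi)=(\dim\mathrm{Ext}^1_{\mathcal C}(X_i,X_j))_{i,j}$; $\mathrm{fpdim}(\mathcal C)=\sup\{\rho(C(\phi)):\phi\text{ a brick set}\}$, $\rho$ the spectral radius. *)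

theory Defs
  imports "Jordan_Normal_Form.Spectral_Radius" "HOL-Library.Extended_Real" "HOL-Library.Function_Algebras"
begin

text \<open>Matrices over the field 'k are encoded as functions nat \<Rightarrow> nat \<Rightarrow> 'k
  (entries outside the relevant range are 0); this type is a 'k-vector space
  under pointwise operations, so subspace dimensions can be taken with
  the library notion vector_space.dim.\<close>

definition mscale :: "'k::field \<Rightarrow> (nat \<Rightarrow> nat \<Rightarrow> 'k) \<Rightarrow> (nat \<Rightarrow> nat \<Rightarrow> 'k)" where
  "mscale c A = (\<lambda>i j. c * A i j)"

definition tscale :: "'k::field \<Rightarrow> (nat \<Rightarrow> nat \<Rightarrow> nat \<Rightarrow> 'k) \<Rightarrow> (nat \<Rightarrow> nat \<Rightarrow> nat \<Rightarrow> 'k)" where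
  "tscale c F = (\<lambda>l i j. c * F l i j)"

definition mmul :: "nat \<Rightarrow> (nat \<Rightarrow> nat \<Rightarrow> 'k::field) \<Rightarrow> (nat \<Rightarrow> nat \<Rightarrow> 'k) \<Rightarrow> nat \<Rightarrow> nat \<Rightarrow> 'k" where
  "mmul d A B = (\<lambda>i j. \<Sum>k<d. A i k * B k j)"

text \<open>A finite-dimensional module over k[x_0,...,x_(r-1)]: a dimension d and
  r pairwise commuting d\<times>d matrices X l (action of x_l), l < r.\<close>
type_synonym 'k rep = "nat \<times> (nat \<Rightarrow> nat \<Rightarrow> nat \<Rightarrow> 'k)"

definition is_rep :: "nat \<Rightarrow> 'k::field rep \<Rightarrow> bool" where
  "is_rep r M = (case M of (d, X) \<Rightarrow>
     (\<forall>l i j. (l \<ge> r \<or> i \<ge> d \<or> j \<ge> d) \<longrightarrow> X l i j = 0) \<and>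
     (\<forall>l<r. \<forall>l'<r. \<forall>i<d. \<forall>j<d. mmul d (X l) (X l') i j = mmul d (X l') (X l) i j))"

definition hom_space :: "nat \<Rightarrow> 'k::field rep \<Rightarrow> 'k rep \<Rightarrow> (nat \<Rightarrow> nat \<Rightarrow> 'k) set" where
  "hom_space r M N = (case M of (dM, XM) \<Rightarrow> case N of (dN, XN) \<Rightarrow>
     {T. (\<forall>a b. (a \<ge> dN \<or> b \<ge> dM) \<longrightarrow> T a b = 0) \<and>
         (\<forall>l<r. \<forall>a<dN. \<forall>b<dM. mmul dM T (XM l) a b = mmul dN (XN l) T a b)})"

definition hom_dim :: "nat \<Rightarrow> 'k::field rep \<Rightarrow> 'k rep \<Rightarrow> nat" where
  "hom_dim r M N = vector_space.dim mscale (hom_space r M N)"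

text \<open>Ext^1(M,N) = classes of extensions 0 \<rightarrow> N \<rightarrow> E \<rightarrow> M \<rightarrow> 0.  Such an E is N \<oplus> M with
  x_l acting by the block matrix [[X^N_l, F_l],[0, X^M_l]]; these commute iff F is
  in ext_cocycles, and two such extensions are equivalent iff their difference
  is in ext_coboundaries (F_l = X^N_l g - g X^M_l, the equivalence being
  [[1,g],[0,1]]).  Hence Ext^1(M,N) = Z/B.\<close>
definition ext_cocycles :: "nat \<Rightarrow> 'k::field rep \<Rightarrow> 'k rep \<Rightarrow> (nat \<Rightarrow> nat \<Rightarrow> nat \<Rightarrow> 'k) set" where
  "ext_cocycles r M N = (case M of (dM, XM) \<Rightarrow> case N of (dN, XN) \<Rightarrow>
     {F. (\<forall>l a b. (l \<ge> r \<or> a \<ge> dN \<or> b \<ge> dM) \<longrightarrow> F l a b = 0) \<and>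
         (\<forall>l<r. \<forall>l'<r. \<forall>a<dN. \<forall>b<dM.
            mmul dN (XN l) (F l') a b + mmul dM (F l) (XM l') a b =
            mmul dN (XN l') (F l) a b + mmul dM (F l') (XM l) a b)})"

definition ext_coboundaries :: "nat \<Rightarrow> 'k::field rep \<Rightarrow> 'k rep \<Rightarrow> (nat \<Rightarrow> nat \<Rightarrow> nat \<Rightarrow> 'k) set" where
  "ext_coboundaries r M N = (case M of (dM, XM) \<Rightarrow> case N of (dN, XN) \<Rightarrow>
     {F. \<exists>g. (\<forall>a b. (a \<ge> dN \<or> b \<ge> dM) \<longrightarrow> g a b = 0) \<and>
         (\<forall>l a b. F l a b = (if l < r \<and> a < dN \<and> b < dM
                               then mmul dN (XN l) g a b - mmul dM g (XM l) a b else 0))})"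

definition ext1_dim :: "nat \<Rightarrow> 'k::field rep \<Rightarrow> 'k rep \<Rightarrow> nat" where
  "ext1_dim r M N = vector_space.dim tscale (ext_cocycles r M N)
                    - vector_space.dim tscale (ext_coboundaries r M N)"

definition brick :: "nat \<Rightarrow> 'k::field rep \<Rightarrow> bool" where
  "brick r M = (is_rep r M \<and> hom_dim r M M = 1)"

definition brick_set :: "nat \<Rightarrow> 'k::field rep list \<Rightarrow> bool" where
  "brick_set r \<phi> = ((\<forall>M \<in> set \<phi>. brick r M) \<and>
     (\<forall>i<length \<phi>. \<forall>j<length \<phi>. i \<noteq> j \<longrightarrow> hom_dim r (\<phi> ! i) (\<phi> ! j) = 0))"

definition adj_matrix :: "nat \<Rightarrow> 'k::field rep list \<Rightarrow> complex mat" where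
  "adj_matrix r \<phi> = mat (length \<phi>) (length \<phi>)
     (\<lambda>(i, j). of_nat (ext1_dim r (\<phi> ! i) (\<phi> ! j)))"

definition fpdim_REP :: "'k::field itself \<Rightarrow> nat \<Rightarrow> ereal" where
  "fpdim_REP _ r = (SUP \<phi> \<in> {\<phi> :: 'k rep list. brick_set r \<phi> \<and> \<phi> \<noteq> []}.
                       ereal (spectral_radius (adj_matrix r \<phi>)))"

end

theory Submission
  imports Defs
begin

lemma vs_m: "vector_space (mscale :: 'k::field \<Rightarrow> _)"
  by unfold_locales (simp_all add: mscale_def fun_eq_iff algebra_simps)
lemma vs_t: "vector_space (tscale :: 'k::field \<Rightarrow> _)"
  by unfold_locales (simp_all add: tscale_def fun_eq_iff algebra_simps)

interpretation MS: vector_space "mscale :: 'k::field \<Rightarrow> _" by (rule vs_m)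
interpretation TS: vector_space "tscale :: 'k::field \<Rightarrow> _" by (rule vs_t)

definition evec :: "nat \<Rightarrow> nat \<Rightarrow> nat \<Rightarrow> nat \<Rightarrow> 'k::field" where
  "evec l = (\<lambda>l' a b. if l' = l \<and> a = 0 \<and> b = 0 then 1 else 0)"

lemma sum_evec: "finite A \<Longrightarrow> (\<Sum>v\<in>evec ` A. tscale (c v) v) l' a b
   = (if l' \<in> A \<and> a = 0 \<and> b = 0 then (c (evec l' :: nat \<Rightarrow> nat \<Rightarrow> nat \<Rightarrow> 'k::field)) else 0)"
proof (induction A rule: finite_induct)
  case empty then show ?case by simp
next
  case (insert x F)
  have inj: "inj (evec :: nat \<Rightarrow> nat \<Rightarrow> nat \<Rightarrow> nat \<Rightarrow> 'k)"
    by (auto simp: inj_def evec_def fun_eq_iff)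
  have "(evec x :: nat \<Rightarrow> nat \<Rightarrow> nat \<Rightarrow> 'k) \<notin> evec ` F"
  proof
    assume "(evec x :: nat \<Rightarrow> nat \<Rightarrow> nat \<Rightarrow> 'k) \<in> evec ` F"
    then obtain y where y: "y \<in> F" "(evec x :: nat \<Rightarrow> nat \<Rightarrow> nat \<Rightarrow> 'k) = evec y" by auto
    then have "x = y" using inj by (simp add: inj_eq)
    then show False using y insert(2) by simp
  qed
  then show ?case using insert by (auto simp: tscale_def evec_def)
qed

lemma dim_Z:
  "TS.dim {F :: nat \<Rightarrow> nat \<Rightarrow> nat \<Rightarrow> 'k::field. \<forall>l a b. (l \<ge> r \<or> a \<ge> 1 \<or> b \<ge> 1) \<longrightarrow> F l a b = 0} = r"
proof (rule TS.dim_unique[where B = "evec ` {..<r}"])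
  have inj: "inj (evec :: nat \<Rightarrow> nat \<Rightarrow> nat \<Rightarrow> nat \<Rightarrow> 'k)"
    by (auto simp: inj_def evec_def fun_eq_iff)
  show "card (evec ` {..<r} :: (nat \<Rightarrow> nat \<Rightarrow> nat \<Rightarrow> 'k) set) = r"
    using inj by (simp add: card_image inj_on_subset)
  show "evec ` {..<r} \<subseteq> {F :: nat \<Rightarrow> nat \<Rightarrow> nat \<Rightarrow> 'k. \<forall>l a b. (l \<ge> r \<or> a \<ge> 1 \<or> b \<ge> 1) \<longrightarrow> F l a b = 0}"
    by (auto simp: evec_def)
  show "{F :: nat \<Rightarrow> nat \<Rightarrow> nat \<Rightarrow> 'k. \<forall>l a b. (l \<ge> r \<or> a \<ge> 1 \<or> b \<ge> 1) \<longrightarrow> F l a b = 0} \<subseteq> TS.span (evec ` {..<r})"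
  proof
    fix F :: "nat \<Rightarrow> nat \<Rightarrow> nat \<Rightarrow> 'k"
    assume F: "F \<in> {F. \<forall>l a b. (l \<ge> r \<or> a \<ge> 1 \<or> b \<ge> 1) \<longrightarrow> F l a b = 0}"
    define c where "c v = F (inv_into UNIV evec v) 0 0" for v :: "nat \<Rightarrow> nat \<Rightarrow> nat \<Rightarrow> 'k"
    have "F = (\<Sum>v\<in>evec ` {..<r}. tscale (c v) v)"
    proof (intro ext)
      fix l a b
      show "F l a b = (\<Sum>v\<in>evec ` {..<r}. tscale (c v) v) l a b"
        unfolding sum_evec[OF finite_lessThan] c_def inv_into_f_f[OF inj UNIV_I]
        using F by (auto simp: not_le)
    qed
    also have "\<dots> \<in> TS.span (evec ` {..<r})"
      by (intro TS.span_sum TS.span_scale TS.span_base)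
    finally show "F \<in> TS.span (evec ` {..<r})" .
  qed
  show "TS.independent (evec ` {..<r} :: (nat \<Rightarrow> nat \<Rightarrow> nat \<Rightarrow> 'k) set)"
    unfolding TS.independent_explicit_module
  proof (intro allI impI)
    fix t u v
    assume h: "finite t" "t \<subseteq> evec ` {..<r}" "(\<Sum>v\<in>t. tscale (u v) v) = (0 :: nat \<Rightarrow> nat \<Rightarrow> nat \<Rightarrow> 'k)" "v \<in> t"
    obtain A where A: "A \<subseteq> {..<r}" "t = evec ` A" using h(2) by (meson subset_imageE)
    have fA: "finite A" using A(1) finite_subset by blast
    obtain l where l: "l \<in> A" "v = evec l" using h(4) A by auto
    have "(\<Sum>v\<in>t. tscale (u v) v) l 0 0 = u v"
      unfolding A(2) sum_evec[OF fA] using l by simp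
    then show "u v = 0" using h(3) by simp
  qed
qed

definition idm :: "nat \<Rightarrow> nat \<Rightarrow> nat \<Rightarrow> 'k::field" where
  "idm d = (\<lambda>a b. if a < d \<and> a = b then 1 else 0)"

definition eab :: "nat \<Rightarrow> nat \<Rightarrow> nat \<Rightarrow> nat \<Rightarrow> 'k::field" where
  "eab i j = (\<lambda>a b. if a = i \<and> b = j then 1 else 0)"

lemma mmul_idm_left: "a < d \<Longrightarrow> mmul d (mscale c (idm d)) Y a b = c * (Y a b :: 'k::field)"
proof -
  assume a: "a < d"
  have "mmul d (mscale c (idm d)) Y a b = (\<Sum>k<d. if k = a then c * Y a b else 0)"
    unfolding mmul_def mscale_def idm_def by (intro sum.cong) auto
  also have "\<dots> = c * Y a b" using a by simp
  finally show ?thesis .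
qed

lemma mmul_idm_right: "b < d \<Longrightarrow> mmul d Y (mscale c (idm d)) a b = c * (Y a b :: 'k::field)"
proof -
  assume b: "b < d"
  have "mmul d Y (mscale c (idm d)) a b = (\<Sum>k<d. if k = b then c * Y a b else 0)"
    unfolding mmul_def mscale_def idm_def by (intro sum.cong) auto
  also have "\<dots> = c * Y a b" using b by simp
  finally show ?thesis .
qed

lemma dim1_span:
  assumes "MS.dim (S :: (nat \<Rightarrow> nat \<Rightarrow> 'k::field) set) = 1"
  obtains v where "\<And>T. T \<in> S \<Longrightarrow> \<exists>c. T = mscale c v"
proof -
  obtain B where B: "B \<subseteq> S" "MS.independent B" "S \<subseteq> MS.span B" "card B = MS.dim S"
    by (rule MS.basis_exists)
  then obtain v where "B = {v}" using assms by (metis card_1_singletonE)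
  then have "S \<subseteq> range (\<lambda>c. mscale c v)" using B(3) MS.span_singleton by auto
  then show ?thesis using that by blast
qed

lemma brick_dim1:
  assumes "brick r (d, X :: nat \<Rightarrow> nat \<Rightarrow> nat \<Rightarrow> 'k::field)"
  shows "d = 1"
proof -
  have rep: "is_rep r (d, X)" and hd: "hom_dim r (d, X) (d, X) = 1"
    using assms by (auto simp: brick_def)
  let ?S = "hom_space r (d, X) (d, X)"
  have dimS: "MS.dim ?S = 1" using hd by (simp add: hom_dim_def)
  obtain v where v: "\<And>T. T \<in> ?S \<Longrightarrow> \<exists>c. T = mscale c v"
    using dim1_span[OF dimS] by blast
  have "d \<noteq> 0"
  proof
    assume "d = 0"
    then have "?S \<subseteq> {0}" by (auto simp: hom_space_def fun_eq_iff)
    then have "MS.dim ?S = 0" by (intro MS.dim_unique[where B="{}"]) (auto simp: MS.span_empty MS.independent_empty)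
    then show False using dimS by simp
  qed
  moreover have "\<not> d \<ge> 2"
  proof
    assume d2: "d \<ge> 2"
    have idS: "mscale 1 (idm d) \<in> ?S"
    proof -
      have "mmul d (mscale 1 (idm d)) (X l) a b = mmul d (X l) (mscale 1 (idm d)) a b" if "a<d" "b<d" for l a b
        using that by (simp only: mmul_idm_left mmul_idm_right)
      moreover have "\<forall>a b. (a \<ge> d \<or> b \<ge> d) \<longrightarrow> mscale 1 (idm d) a b = (0::'k)"
        by (auto simp: mscale_def idm_def)
      ultimately show ?thesis unfolding hom_space_def by simp
    qed
    obtain c0 where c0: "mscale 1 (idm d) = mscale c0 v" using v[OF idS] by blast
    have "c0 \<noteq> 0"
    proof
      assume "c0 = 0"
      then have "mscale 1 (idm d) 0 0 = (0::'k)" using c0 by (simp add: mscale_def)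
      then show False using d2 by (simp add: mscale_def idm_def)
    qed
    have XS: "X l \<in> ?S" if "l < r" for l
      using rep that unfolding hom_space_def is_rep_def by auto
    define sc where "sc l = (if l < r then SOME c. X l = mscale c v else 0)" for l
    have Xsc: "X l = mscale (sc l) v" for l
    proof (cases "l < r")
      case True
      then show ?thesis using someI_ex[OF v[OF XS[OF True]]] by (simp add: sc_def)
    next
      case False
      then show ?thesis using rep by (auto simp: is_rep_def mscale_def fun_eq_iff sc_def)
    qed
    have vid: "v = mscale (1/c0) (idm d)"
      using c0 \<open>c0 \<noteq> 0\<close> by (auto simp: mscale_def fun_eq_iff)
    have Xid: "\<exists>c. X l = mscale c (idm d)" for l
    proof
      show "X l = mscale (sc l * (1/c0)) (idm d)"
        using Xsc[of l] unfolding vid by (simp add: mscale_def mult.assoc)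
    qed
    have allS: "T \<in> ?S" if "\<forall>a b. (a \<ge> d \<or> b \<ge> d) \<longrightarrow> T a b = 0" for T
    proof -
      have "mmul d T (X l) a b = mmul d (X l) T a b" if "a < d" "b < d" for l a b
      proof -
        obtain c where "X l = mscale c (idm d)" using Xid by blast
        then show ?thesis using that by (simp add: mmul_idm_left mmul_idm_right mult.commute)
      qed
      then show ?thesis using \<open>\<forall>a b. _\<close> by (auto simp: hom_space_def)
    qed
    have E0: "eab 0 0 \<in> ?S" using d2 by (intro allS) (auto simp: eab_def)
    have E1: "eab 1 1 \<in> ?S" using d2 by (intro allS) (auto simp: eab_def)
    obtain c1 where c1: "eab 0 0 = mscale c1 v" using v[OF E0] by blast
    obtain c2 where c2: "eab 1 1 = mscale c2 v" using v[OF E1] by blast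
    have "(1::'k) = c1 * v 0 0" using fun_cong[OF fun_cong[OF c1, of 0], of 0] by (simp add: eab_def mscale_def)
    moreover have "(0::'k) = c2 * v 0 0" using fun_cong[OF fun_cong[OF c2, of 0], of 0] by (simp add: eab_def mscale_def)
    ultimately have "c2 = 0" by (metis mult_eq_0_iff one_neq_zero)
    then have "(1::'k) = 0" using fun_cong[OF fun_cong[OF c2, of 1], of 1] by (simp add: eab_def mscale_def)
    then show False by simp
  qed
  ultimately show ?thesis by linarith
qed

lemma mmul1: "mmul 1 A B = (\<lambda>a b. A a 0 * (B 0 b :: 'k::field))"
  by (simp add: mmul_def fun_eq_iff)
lemma mmulS: "mmul (Suc 0) A B = (\<lambda>a b. A a 0 * (B 0 b :: 'k::field))"
  by (simp add: mmul_def fun_eq_iff)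
lemma mmulS': "mmul (Suc 0) A B a b = A a 0 * (B 0 b :: 'k::field)"
  by (simp add: mmul_def)

lemma rep1_eq:
  assumes "is_rep r (1, X :: nat \<Rightarrow> nat \<Rightarrow> nat \<Rightarrow> 'k::field)" "is_rep r (1, Y)"
    "\<forall>l<r. X l 0 0 = Y l 0 0"
  shows "X = Y"
proof (intro ext)
  fix l a b
  have sx: "\<And>l i j. (r \<le> l \<or> 1 \<le> i \<or> 1 \<le> j) \<Longrightarrow> X l i j = 0"
    using assms(1) unfolding is_rep_def by fastforce
  have sy: "\<And>l i j. (r \<le> l \<or> 1 \<le> i \<or> 1 \<le> j) \<Longrightarrow> Y l i j = 0"
    using assms(2) unfolding is_rep_def by fastforce
  show "X l a b = Y l a b"
  proof (cases "l < r \<and> a = 0 \<and> b = 0")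
    case True then show ?thesis using assms(3) by simp
  next
    case False
    then have "r \<le> l \<or> 1 \<le> a \<or> 1 \<le> b" by auto
    then show ?thesis using sx sy by metis
  qed
qed

lemma ext_diff:
  assumes "is_rep r (1, X :: nat \<Rightarrow> nat \<Rightarrow> nat \<Rightarrow> 'k::field)" "is_rep r (1, Y)"
    "l0 < r" "X l0 0 0 \<noteq> Y l0 0 0"
  shows "ext1_dim r (1, X) (1, Y) = 0"
proof -
  define \<delta> where "\<delta> l = Y l 0 0 - X l 0 0" for l
  have d0: "\<delta> l0 \<noteq> 0" using assms(4) by (simp add: \<delta>_def)
  have "ext_cocycles r (1, X) (1, Y) = ext_coboundaries r (1, X) (1, Y)"
  proof (intro equalityI subsetI)
    fix F
    assume F: "F \<in> ext_cocycles r (1, X) (1, Y)"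
    have sup: "\<forall>l a b. (l \<ge> r \<or> a \<ge> 1 \<or> b \<ge> 1) \<longrightarrow> F l a b = 0"
      and coc: "\<And>l l'. l < r \<Longrightarrow> l' < r \<Longrightarrow>
        Y l 0 0 * F l' 0 0 + F l 0 0 * X l' 0 0 = Y l' 0 0 * F l 0 0 + F l' 0 0 * X l 0 0"
      using F unfolding ext_cocycles_def by (auto simp: mmul1 mmulS mmulS')
    define g :: "nat \<Rightarrow> nat \<Rightarrow> 'k" where "g = (\<lambda>a b. if a = 0 \<and> b = 0 then F l0 0 0 / \<delta> l0 else (0::'k))"
    have key: "F l 0 0 = Y l 0 0 * g 0 0 - g 0 0 * X l 0 0" if "l < r" for l
    proof -
      have "\<delta> l0 * F l 0 0 = \<delta> l * F l0 0 0"
        using coc[OF assms(3) that] by (simp add: \<delta>_def algebra_simps)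
      then have "F l 0 0 = \<delta> l * (F l0 0 0 / \<delta> l0)" using d0 by (simp add: field_simps)
      moreover have "Y l 0 0 * g 0 0 - g 0 0 * X l 0 0 = \<delta> l * (F l0 0 0 / \<delta> l0)"
        by (simp add: g_def \<delta>_def algebra_simps diff_divide_distrib)
      ultimately show ?thesis by simp
    qed
    have gs: "\<forall>a b. (1 \<le> a \<or> 1 \<le> b) \<longrightarrow> g a b = 0" by (auto simp: g_def)
    have Fe: "\<forall>l a b. F l a b = (if l < r \<and> a < 1 \<and> b < 1 then Y l a 0 * g 0 b - g a 0 * X l 0 b else 0)"
    proof (intro allI)
      fix l a b
      show "F l a b = (if l < r \<and> a < 1 \<and> b < 1 then Y l a 0 * g 0 b - g a 0 * X l 0 b else 0)"
      proof (cases "l < r \<and> a < 1 \<and> b < 1")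
        case True then show ?thesis using key by auto
      next
        case False then show ?thesis using sup by (auto simp: not_less)
      qed
    qed
    show "F \<in> ext_coboundaries r (1, X) (1, Y)"
      unfolding ext_coboundaries_def using gs Fe by (auto simp: mmul1 mmulS mmulS')
  next
    fix F
    assume F: "F \<in> ext_coboundaries r (1, X) (1, Y)"
    then obtain g :: "nat \<Rightarrow> nat \<Rightarrow> 'k" where g: "\<And>l a b. F l a b = (if l < r \<and> a < 1 \<and> b < 1
                               then Y l a 0 * g 0 b - g a 0 * X l 0 b else 0)"
      unfolding ext_coboundaries_def by (auto cong: if_cong simp: mmulS')
    show "F \<in> ext_cocycles r (1, X) (1, Y)"
      using g unfolding ext_cocycles_def by (auto simp: algebra_simps mmul1 mmulS mmulS')
  qed
  then show ?thesis by (simp add: ext1_dim_def)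
qed

lemma ext_same:
  assumes "is_rep r (1, X :: nat \<Rightarrow> nat \<Rightarrow> nat \<Rightarrow> 'k::field)"
  shows "ext1_dim r (1, X) (1, X) = r"
proof -
  have Z: "ext_cocycles r (1, X) (1, X) = {F :: nat \<Rightarrow> nat \<Rightarrow> nat \<Rightarrow> 'k. \<forall>l a b. (l \<ge> r \<or> a \<ge> 1 \<or> b \<ge> 1) \<longrightarrow> F l a b = 0}"
    unfolding ext_cocycles_def by (auto simp: algebra_simps mmul1 mmulS mmulS')
  have B: "ext_coboundaries r (1, X) (1, X) \<subseteq> {0}"
    unfolding ext_coboundaries_def by (auto simp: fun_eq_iff mmul1 mmulS mmulS') (metis gr0I)
  have "TS.dim (ext_coboundaries r (1, X) (1, X)) = 0"
    using B by (intro TS.dim_unique[where B="{}"]) (auto simp: TS.span_empty TS.independent_empty)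
  then show ?thesis unfolding ext1_dim_def Z dim_Z by simp
qed

definition dmat :: "nat \<Rightarrow> complex \<Rightarrow> complex mat" where
  "dmat n c = mat n n (\<lambda>(i, j). if i = j then c else 0)"

lemma dmat_mult: "v \<in> carrier_vec n \<Longrightarrow> dmat n c *\<^sub>v v = c \<cdot>\<^sub>v v"
proof (intro eq_vecI)
  fix i assume v: "v \<in> carrier_vec n" and i: "i < dim_vec (c \<cdot>\<^sub>v v)"
  then have i': "i < n" by simp
  have "(dmat n c *\<^sub>v v) $ i = (\<Sum>j<n. (if i = j then c else 0) * v $ j)"
    using v i' by (simp add: dmat_def scalar_prod_def atLeast0LessThan)
  also have "\<dots> = (\<Sum>j<n. if j = i then c * v $ i else 0)" by (intro sum.cong) auto
  also have "\<dots> = c * v $ i" using i' by simp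
  finally show "(dmat n c *\<^sub>v v) $ i = (c \<cdot>\<^sub>v v) $ i" using v i' by simp
qed (auto simp: dmat_def)

lemma spectrum_dmat: assumes n: "n > 0" shows "spectrum (dmat n c) = {c}"
proof (intro equalityI subsetI)
  fix k assume "k \<in> spectrum (dmat n c)"
  then obtain v where v: "v \<in> carrier_vec n" "v \<noteq> 0\<^sub>v n" "dmat n c *\<^sub>v v = k \<cdot>\<^sub>v v"
    by (auto simp: spectrum_def eigenvalue_def eigenvector_def dmat_def)
  obtain i where i: "i < n" "v $ i \<noteq> 0" using v(1,2) by (metis carrier_vecD eq_vecI index_zero_vec(1) index_zero_vec(2))
  have "c * v $ i = k * v $ i"
    using arg_cong[OF v(3), of "\<lambda>w. w $ i"] dmat_mult[OF v(1)] i v(1) by simp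
  then show "k \<in> {c}" using i by simp
next
  fix k assume "k \<in> {c}"
  then show "k \<in> spectrum (dmat n c)"
    unfolding spectrum_def eigenvalue_def eigenvector_def
    using n by (intro CollectI exI[of _ "unit_vec n 0"]) (auto simp: dmat_mult dmat_def)
qed

lemma spectral_radius_dmat: "n > 0 \<Longrightarrow> spectral_radius (dmat n c) = norm c"
  by (simp add: spectral_radius_def spectrum_dmat)

definition S0 :: "'k::field rep" where "S0 = (1, \<lambda>l i j. 0)"

lemma S0_brick: "brick r (S0 :: 'k::field rep)"
proof -
  have rep: "is_rep r (S0 :: 'k rep)" by (simp add: is_rep_def S0_def mmul_def)
  have H: "hom_space r (S0 :: 'k rep) S0 = {T. \<forall>a b. (a \<ge> 1 \<or> b \<ge> 1) \<longrightarrow> T a b = 0}"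
    by (auto simp: hom_space_def S0_def mmul_def)
  have "MS.dim {T :: nat \<Rightarrow> nat \<Rightarrow> 'k. \<forall>a b. (a \<ge> 1 \<or> b \<ge> 1) \<longrightarrow> T a b = 0} = 1"
  proof (rule MS.dim_unique[where B = "{eab 0 0}"])
    show "{eab 0 0} \<subseteq> {T :: nat \<Rightarrow> nat \<Rightarrow> 'k. \<forall>a b. (a \<ge> 1 \<or> b \<ge> 1) \<longrightarrow> T a b = 0}"
      by (auto simp: eab_def)
    show "{T :: nat \<Rightarrow> nat \<Rightarrow> 'k. \<forall>a b. (a \<ge> 1 \<or> b \<ge> 1) \<longrightarrow> T a b = 0} \<subseteq> MS.span {eab 0 0}"
    proof
      fix T :: "nat \<Rightarrow> nat \<Rightarrow> 'k" assume T: "T \<in> {T. \<forall>a b. (a \<ge> 1 \<or> b \<ge> 1) \<longrightarrow> T a b = 0}"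
      have "T = mscale (T 0 0) (eab 0 0)"
      proof (intro ext)
        fix a b show "T a b = mscale (T 0 0) (eab 0 0) a b"
          using T by (cases "a = 0 \<and> b = 0") (auto simp: mscale_def eab_def)
      qed
      then show "T \<in> MS.span {eab 0 0}" by (metis MS.span_base MS.span_scale singletonI)
    qed
    have "eab 0 0 \<noteq> (0 :: nat \<Rightarrow> nat \<Rightarrow> 'k)" by (auto simp: eab_def fun_eq_iff)
    then show "MS.independent {eab 0 0 :: nat \<Rightarrow> nat \<Rightarrow> 'k}" by simp
  qed simp
  then show ?thesis using rep H by (simp add: brick_def hom_dim_def)
qed

lemma brick_form:
  assumes "brick r (M :: 'k::field rep)"
  obtains X where "M = (1, X)" "is_rep r (1, X)"
proof -
  obtain d X where M: "M = (d, X)" by (cases M)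
  then have "d = 1" using assms brick_dim1 by blast
  then show ?thesis using that M assms by (auto simp: brick_def)
qed

lemma adj_brick_set:
  assumes bs: "brick_set r (\<phi> :: 'k::field rep list)"
  shows "adj_matrix r \<phi> = dmat (length \<phi>) (of_nat r)"
proof (rule eq_matI)
  fix i j assume i: "i < dim_row (dmat (length \<phi>) (of_nat r))" and j: "j < dim_col (dmat (length \<phi>) (of_nat r))"
  then have i': "i < length \<phi>" and j': "j < length \<phi>" by (auto simp: dmat_def)
  have bi: "brick r (\<phi> ! i)" and bj: "brick r (\<phi> ! j)" using bs i' j' by (auto simp: brick_set_def)
  obtain X where X: "\<phi> ! i = (1, X)" "is_rep r (1, X)" using brick_form[OF bi] by blast
  obtain Y where Y: "\<phi> ! j = (1, Y)" "is_rep r (1, Y)" using brick_form[OF bj] by blast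
  have "ext1_dim r (\<phi> ! i) (\<phi> ! j) = (if i = j then r else 0)"
  proof (cases "i = j")
    case True
    then show ?thesis using X ext_same by (metis)
  next
    case False
    have "\<not> (\<forall>l<r. X l 0 0 = Y l 0 0)"
    proof
      assume "\<forall>l<r. X l 0 0 = Y l 0 0"
      then have "X = Y" using rep1_eq X(2) Y(2) by blast
      then have "\<phi> ! i = \<phi> ! j" using X Y by simp
      moreover have "hom_dim r (\<phi> ! i) (\<phi> ! j) = 0" using bs False i' j' by (auto simp: brick_set_def)
      ultimately show False using bi by (simp add: brick_def)
    qed
    then obtain l0 where "l0 < r" "X l0 0 0 \<noteq> Y l0 0 0" by blast
    then show ?thesis using False X Y ext_diff by metis
  qed
  then show "adj_matrix r \<phi> $$ (i, j) = dmat (length \<phi>) (of_nat r) $$ (i, j)"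
    using i' j' by (simp add: adj_matrix_def dmat_def)
qed (auto simp: adj_matrix_def dmat_def)

theorem corollary7p5:
  fixes r :: nat
  assumes "r \<ge> 1"
  shows "fpdim_REP TYPE('k::alg_closed_field) r = ereal (real r)"
  unfolding fpdim_REP_def
proof (rule SUP_eq_const)
  have "brick_set r [S0 :: 'k rep]" by (simp add: brick_set_def S0_brick)
  then show "{\<phi> :: 'k rep list. brick_set r \<phi> \<and> \<phi> \<noteq> []} \<noteq> {}" by blast
next
  fix \<phi> :: "'k rep list" assume "\<phi> \<in> {\<phi>. brick_set r \<phi> \<and> \<phi> \<noteq> []}"
  then have "brick_set r \<phi>" "length \<phi> > 0" by auto
  then show "ereal (spectral_radius (adj_matrix r \<phi>)) = ereal (real r)"
    by (simp add: adj_brick_set spectral_radius_dmat)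
qed
end
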